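(* Let $\alpha\in\mathbb{N}_0$ and let $L_{2\alpha+4,x}^{\alpha}y(x)=(-1)^{\alpha+1}e^x x\,D_x^{\alpha+2}\{e^{-x}D_x^{\alpha+2}[x^{\alpha+1}y(x)]\}$. Then for all $y,u\in C^{(2\alpha+4)}(0,\infty)$ and $x>0$: $$L_{2\alpha+4,x}^{\alpha}y(x)=(-1)^{\alpha+1}\prod_{j=0}^{\alpha+1}\Big\{L_{2,x}^{\alpha}-\frac{\alpha+1}{x}-j\Big\}y(x),\qquad L_{2\alpha+4,x}^{\alpha}[xu(x)]=(-1)^{\alpha+1}x\prod_{j=0}^{\alpha+1}\big\{L_{2,x}^{\alpha+2}-j-1\big\}u(x),$$ and $$L_{2\alpha+4,x}^{\alpha}y(x)=(-1)^{\alpha+1}\prod_{j=0}^{\alpha+1}\Big\{L_{2,x}^{2j-1}-\frac{2j}{x}-j\Big\}y(x),\qquad L_{2\alpha+4,x}^{\alpha}[xu(x)]=(-1)^{\alpha+1}x\prod_{j=0}^{\alpha+1}\big\{L_{2,x}^{2j+1}-j-1\big\}u(x).$$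
   Context: $D_x^i$ is the $i$-fold derivative. For real $\gamma$ (including $\gamma=-1$), $L_{2,x}^{\gamma}=xD_x^2+(\gamma+1-x)D_x$ (so $L_{2,x}^{-1}=x[D_x^2-D_x]$); terms like $-\frac{c}{x}$ act as multiplication operators. The product $\prod_{j=0}^{\alpha+1}\{A_j\}$ of differential expressions is non-commutative and means $A_{\alpha+1}A_{\alpha}\cdots A_1A_0$, i.e. the factors are applied successively to the function on the right in order $j=0,1,\dots,\alpha+1$. *)

theory Defs
  imports "HOL-Analysis.Analysis"
begin

abbreviation Dr :: "(real \<Rightarrow> real) \<Rightarrow> real \<Rightarrow> real" where
  "Dr \<equiv> deriv"

definition C_k_on :: "nat \<Rightarrow> real set \<Rightarrow> (real \<Rightarrow> real) \<Rightarrow> bool" where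
  "C_k_on k S f \<longleftrightarrow>
     (\<forall>j<k. \<forall>x\<in>S. ((Dr ^^ j) f) differentiable (at x)) \<and>
     continuous_on S ((Dr ^^ k) f)"

definition L2 :: "real \<Rightarrow> (real \<Rightarrow> real) \<Rightarrow> real \<Rightarrow> real" where
  "L2 \<gamma> f = (\<lambda>x. x * (Dr ^^ 2) f x + (\<gamma> + 1 - x) * deriv f x)"

text \<open>Non-commutative product of operators: opprod A n = A (n-1) o ... o A 1 o A 0,
  i.e. A 0 is applied first.\<close>
primrec opprod :: "(nat \<Rightarrow> (real \<Rightarrow> real) \<Rightarrow> real \<Rightarrow> real) \<Rightarrow> nat \<Rightarrow> (real \<Rightarrow> real) \<Rightarrow> real \<Rightarrow> real" where
  "opprod A 0 f = f"
| "opprod A (Suc n) f = A n (opprod A n f)"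

definition Lhigh :: "nat \<Rightarrow> (real \<Rightarrow> real) \<Rightarrow> real \<Rightarrow> real" where
  "Lhigh \<alpha> y = (\<lambda>x. (-1) ^ (\<alpha> + 1) * exp x * x *
      (Dr ^^ (\<alpha> + 2)) (\<lambda>t. exp (- t) * (Dr ^^ (\<alpha> + 2)) (\<lambda>s. s ^ (\<alpha> + 1) * y s) t) x)"

end

theory Submission
  imports Defs
begin

abbreviation Pos :: "real set" where "Pos \<equiv> {0<..}"

lemma open_Pos: "open Pos" by simp

lemma loc_deriv: "(\<forall>t\<in>Pos. f t = g t) \<Longrightarrow> x\<in>Pos \<Longrightarrow> deriv f x = deriv g x"
  apply (intro deriv_cong_ev refl)
  using eventually_nhds_in_open[OF open_Pos, of x] by (auto elim!: eventually_mono)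

lemma loc_Dk: "(\<forall>t\<in>Pos. f t = g t) \<Longrightarrow> x\<in>Pos \<Longrightarrow> (Dr^^k) f x = (Dr^^k) g x"
proof (induction k arbitrary: x)
  case 0 then show ?case by simp
next
  case (Suc k)
  have "deriv ((Dr^^k) f) x = deriv ((Dr^^k) g) x"
    by (rule loc_deriv) (use Suc in auto)
  then show ?case by simp
qed

lemma diff_loc: "(f::real\<Rightarrow>real) differentiable at x \<Longrightarrow> (\<forall>t\<in>Pos. f t = g t) \<Longrightarrow> x \<in> Pos \<Longrightarrow> g differentiable at x"
proof -
  assume a: "f differentiable at x" "\<forall>t\<in>Pos. f t = g t" "x \<in> Pos"
  have "(f has_real_derivative deriv f x) (at x)" using a(1) DERIV_deriv_iff_real_differentiable by blast
  then have "(g has_real_derivative deriv f x) (at x)"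
    by (rule has_field_derivative_transform_within_open[OF _ open_Pos a(3)]) (use a in auto)
  then show ?thesis unfolding differentiable_def has_field_derivative_def by blast
qed

definition smooth :: "nat \<Rightarrow> (real \<Rightarrow> real) \<Rightarrow> bool" where
  "smooth k f \<longleftrightarrow> (\<forall>j<k. \<forall>x\<in>Pos. (Dr^^j) f differentiable (at x))"

lemma Dk_Suc: "(Dr^^Suc j) f = (Dr^^j) (deriv f)"
  by (simp add: funpow_Suc_right del: funpow.simps)

lemma smooth_Suc: "smooth (Suc k) f \<longleftrightarrow> (\<forall>x\<in>Pos. f differentiable at x) \<and> smooth k (deriv f)"
  unfolding smooth_def
  by (auto simp: less_Suc_eq_0_disj Dk_Suc simp del: funpow.simps)

lemma smooth_0[simp]: "smooth 0 f" by (simp add: smooth_def)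

lemma smooth_loc: "smooth k f \<Longrightarrow> \<forall>t\<in>Pos. f t = g t \<Longrightarrow> smooth k g"
  unfolding smooth_def
proof (intro allI impI ballI)
  fix j x assume a: "\<forall>j<k. \<forall>x\<in>Pos. (Dr ^^ j) f differentiable at x" "\<forall>t\<in>Pos. f t = g t" "j < k" "x \<in> Pos"
  show "(Dr ^^ j) g differentiable at x"
    by (rule diff_loc[of "(Dr^^j) f"]) (use a loc_Dk in auto)
qed

lemma smooth_mono: "smooth k f \<Longrightarrow> j \<le> k \<Longrightarrow> smooth j f"
  by (auto simp: smooth_def)

lemma smooth_SucD: "smooth (Suc k) f \<Longrightarrow> smooth k f"
  by (erule smooth_mono) simp

lemma smooth_deriv: "smooth (Suc k) f \<Longrightarrow> smooth k (deriv f)"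
  by (simp add: smooth_Suc)

lemma smooth_Dk: "smooth (k + m) f \<Longrightarrow> smooth k ((Dr^^m) f)"
proof (induction m arbitrary: k)
  case 0 then show ?case by simp
next
  case (Suc m)
  have "smooth (Suc k) ((Dr^^m) f)" using Suc by simp
  then show ?case by (simp add: smooth_Suc)
qed

lemma smooth_has_deriv: "smooth (Suc k) f \<Longrightarrow> x\<in>Pos \<Longrightarrow> (f has_real_derivative deriv f x) (at x)"
  by (simp add: smooth_Suc DERIV_deriv_iff_real_differentiable)

lemma smooth_Dk_has_deriv: "smooth (Suc (j + k)) f \<Longrightarrow> x\<in>Pos \<Longrightarrow> ((Dr^^j) f has_real_derivative (Dr^^Suc j) f x) (at x)"
  using smooth_has_deriv[of k "(Dr^^j) f" x] smooth_Dk[of "Suc k" j f] by (simp add: add.commute)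

lemma smooth_const[simp]: "smooth k (\<lambda>t. c)"
proof (induction k arbitrary: c)
  case (Suc k)
  have "smooth k (deriv (\<lambda>t. c))" using Suc by simp
  then show ?case by (simp add: smooth_Suc)
qed simp

lemma smooth_id[simp]: "smooth k (\<lambda>t. t)"
proof (cases k)
  case (Suc k')
  have "deriv (\<lambda>t::real. t) = (\<lambda>t. 1)" by (rule ext, rule DERIV_imp_deriv) (auto intro!: derivative_eq_intros)
  then show ?thesis using Suc by (simp add: smooth_Suc)
qed simp

lemma smooth_add: "smooth k f \<Longrightarrow> smooth k g \<Longrightarrow> smooth k (\<lambda>t. f t + g t)"
proof (induction k arbitrary: f g)
  case (Suc k)
  have d: "\<forall>t\<in>Pos. deriv f t + deriv g t = deriv (\<lambda>t. f t + g t) t"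
    using Suc.prems by (auto intro!: DERIV_imp_deriv[symmetric] derivative_eq_intros smooth_has_deriv)
  have "smooth k (\<lambda>t. deriv f t + deriv g t)" using Suc by (simp add: smooth_Suc)
  then have "smooth k (deriv (\<lambda>t. f t + g t))" using d smooth_loc by blast
  then show ?case using Suc.prems by (auto simp: smooth_Suc)
qed simp

lemma smooth_mult: "smooth k f \<Longrightarrow> smooth k g \<Longrightarrow> smooth k (\<lambda>t. f t * g t)"
proof (induction k arbitrary: f g)
  case (Suc k)
  have d: "\<forall>t\<in>Pos. deriv f t * g t + f t * deriv g t = deriv (\<lambda>t. f t * g t) t"
    using Suc.prems by (auto intro!: DERIV_imp_deriv[symmetric] derivative_eq_intros smooth_has_deriv)
  have "smooth k (\<lambda>t. deriv f t * g t + f t * deriv g t)" 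
    using Suc.prems smooth_SucD[of k f] smooth_SucD[of k g] smooth_deriv[of k f] smooth_deriv[of k g]
    by (intro smooth_add Suc.IH) auto
  then have "smooth k (deriv (\<lambda>t. f t * g t))" using d smooth_loc by blast
  then show ?case using Suc.prems by (auto simp: smooth_Suc)
qed simp

lemma smooth_cmult: "smooth k f \<Longrightarrow> smooth k (\<lambda>t. c * f t)"
  using smooth_mult[OF smooth_const] by blast

lemma smooth_diff: "smooth k f \<Longrightarrow> smooth k g \<Longrightarrow> smooth k (\<lambda>t. f t - g t)"
  using smooth_add[of k f "\<lambda>t. (-1) * g t"] smooth_cmult[of k g "-1"] by simp

lemma smooth_inverse: "smooth k f \<Longrightarrow> \<forall>x\<in>Pos. f x \<noteq> 0 \<Longrightarrow> smooth k (\<lambda>t. inverse (f t))"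
proof (induction k arbitrary: f)
  case (Suc k)
  have d: "\<forall>t\<in>Pos. - deriv f t * (inverse (f t) * inverse (f t)) = deriv (\<lambda>t. inverse (f t)) t"
    using Suc.prems by (auto intro!: DERIV_imp_deriv[symmetric] derivative_eq_intros smooth_has_deriv
        simp: power2_eq_square)
  have "smooth k (\<lambda>t. - deriv f t * (inverse (f t) * inverse (f t)))"
    using Suc.prems smooth_SucD[of k f] smooth_deriv[of k f] smooth_cmult[of k "deriv f" "-1"]
    by (intro smooth_mult Suc.IH) auto
  then have "smooth k (deriv (\<lambda>t. inverse (f t)))" using d smooth_loc by blast
  moreover have "\<forall>x\<in>Pos. (\<lambda>t. inverse (f t)) differentiable at x"
    using Suc.prems by (auto intro!: derivative_intros simp: smooth_Suc)
  ultimately show ?case by (auto simp: smooth_Suc)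
qed simp


lemma smooth_pow[simp]: "smooth k (\<lambda>t. t ^ n)"
  by (induction n) (auto intro: smooth_mult[OF smooth_id, simplified])

lemma Dk_diff: "smooth k f \<Longrightarrow> smooth k g \<Longrightarrow> x\<in>Pos \<Longrightarrow>
   (Dr^^k) (\<lambda>t. f t - g t) x = (Dr^^k) f x - (Dr^^k) g x"
proof (induction k arbitrary: f g x)
  case (Suc k)
  have d: "\<forall>t\<in>Pos. deriv (\<lambda>t. f t - g t) t = deriv f t - deriv g t"
    using Suc.prems by (auto intro!: DERIV_imp_deriv derivative_eq_intros smooth_has_deriv)
  have "(Dr^^Suc k) (\<lambda>t. f t - g t) x = (Dr^^k) (\<lambda>t. deriv f t - deriv g t) x"
    unfolding Dk_Suc by (rule loc_Dk) (use d Suc.prems in auto)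
  also have "\<dots> = (Dr^^k) (deriv f) x - (Dr^^k) (deriv g) x"
    using Suc by (intro Suc.IH) (auto simp: smooth_Suc)
  finally show ?case by (simp only: Dk_Suc)
qed simp

lemma Dk_add: "smooth k f \<Longrightarrow> smooth k g \<Longrightarrow> x\<in>Pos \<Longrightarrow>
   (Dr^^k) (\<lambda>t. f t + g t) x = (Dr^^k) f x + (Dr^^k) g x"
proof (induction k arbitrary: f g x)
  case (Suc k)
  have d: "\<forall>t\<in>Pos. deriv (\<lambda>t. f t + g t) t = deriv f t + deriv g t"
    using Suc.prems by (auto intro!: DERIV_imp_deriv derivative_eq_intros smooth_has_deriv)
  have "(Dr^^Suc k) (\<lambda>t. f t + g t) x = (Dr^^k) (\<lambda>t. deriv f t + deriv g t) x"
    unfolding Dk_Suc by (rule loc_Dk) (use d Suc.prems in auto)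
  also have "\<dots> = (Dr^^k) (deriv f) x + (Dr^^k) (deriv g) x"
    using Suc by (intro Suc.IH) (auto simp: smooth_Suc)
  finally show ?case by (simp only: Dk_Suc)
qed simp

definition Eop :: "(real \<Rightarrow> real) \<Rightarrow> real \<Rightarrow> real" where
  "Eop f = (\<lambda>t. deriv f t - f t)"

definition lop :: "real \<Rightarrow> real \<Rightarrow> (real \<Rightarrow> real) \<Rightarrow> real \<Rightarrow> real" where
  "lop \<gamma> c f = (\<lambda>t. L2 \<gamma> f t - c * f t)"

lemma loc_L2: "(\<forall>t\<in>Pos. f t = g t) \<Longrightarrow> x\<in>Pos \<Longrightarrow> L2 \<gamma> f x = L2 \<gamma> g x"
  unfolding L2_def using loc_Dk[of f g x 2] loc_deriv[of f g x] by simp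

lemma loc_lop: "(\<forall>t\<in>Pos. f t = g t) \<Longrightarrow> x\<in>Pos \<Longrightarrow> lop \<gamma> c f x = lop \<gamma> c g x"
  unfolding lop_def using loc_L2[of f g x] by simp

lemma loc_Eop: "(\<forall>t\<in>Pos. f t = g t) \<Longrightarrow> x\<in>Pos \<Longrightarrow> Eop f x = Eop g x"
  unfolding Eop_def using loc_deriv[of f g x] by simp

lemma loc_Eopn: "(\<forall>t\<in>Pos. f t = g t) \<Longrightarrow> x\<in>Pos \<Longrightarrow> (Eop^^n) f x = (Eop^^n) g x"
proof (induction n arbitrary: x)
  case (Suc n)
  then show ?case by (simp add: loc_Eop)
qed simp

lemma loc_opprod:
  assumes "\<And>j f g x. (\<forall>t\<in>Pos. f t = g t) \<Longrightarrow> x\<in>Pos \<Longrightarrow> A j f x = A j g x"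
  shows "(\<forall>t\<in>Pos. f t = g t) \<Longrightarrow> x\<in>Pos \<Longrightarrow> opprod A n f x = opprod A n g x"
proof (induction n arbitrary: x)
  case (Suc n)
  then show ?case by (simp add: assms)
qed simp

lemma smooth_L2: "smooth (k + 2) f \<Longrightarrow> smooth k (L2 \<gamma> f)"
proof -
  assume a: "smooth (k + 2) f"
  have "smooth k ((Dr^^2) f)" using smooth_Dk[of k 2 f] a by simp
  moreover have "smooth k ((Dr^^1) f)" using smooth_Dk[of k 1 f] a smooth_mono by fastforce
  ultimately show ?thesis unfolding L2_def
    by (intro smooth_add smooth_mult smooth_diff) auto
qed

lemma smooth_lop: "smooth (k + 2) f \<Longrightarrow> smooth k (lop \<gamma> c f)"
  unfolding lop_def
  by (intro smooth_diff smooth_L2 smooth_cmult) (auto elim: smooth_mono)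

lemma smooth_opprod: "smooth (k + 2 * m) f \<Longrightarrow> smooth k (opprod (\<lambda>j. lop (a j) (c j)) m f)"
proof (induction m arbitrary: k)
  case (Suc m)
  have "smooth (k + 2) (opprod (\<lambda>j. lop (a j) (c j)) m f)"
    using Suc by (intro Suc.IH) (simp add: algebra_simps)
  then show ?case by (simp add: smooth_lop)
qed simp

lemma smooth_Eop: "smooth (Suc k) f \<Longrightarrow> smooth k (Eop f)"
  unfolding Eop_def by (intro smooth_diff) (auto simp: smooth_Suc intro: smooth_SucD)


lemma M_deriv:
  assumes "smooth (Suc (Suc (Suc k))) h" "x\<in>Pos"
  shows "deriv (\<lambda>t. t * (Dr^^Suc(Suc k)) h t + (c - t) * (Dr^^Suc k) h t + e * (Dr^^k) h t) x
     = x * (Dr^^Suc(Suc(Suc k))) h x + (c+1-x) * (Dr^^Suc(Suc k)) h x + (e - 1) * (Dr^^Suc k) h x"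
proof -
  have h0: "((Dr^^k) h has_real_derivative (Dr^^Suc k) h x) (at x)"
    by (rule smooth_Dk_has_deriv[of k 2 h x]) (use assms in \<open>simp_all add: add.commute\<close>)
  have h1: "((Dr^^Suc k) h has_real_derivative (Dr^^Suc (Suc k)) h x) (at x)"
    by (rule smooth_Dk_has_deriv[of "Suc k" 1 h x]) (use assms in \<open>simp_all add: add.commute\<close>)
  have h2: "((Dr^^Suc (Suc k)) h has_real_derivative (Dr^^Suc (Suc (Suc k))) h x) (at x)"
    by (rule smooth_Dk_has_deriv[of "Suc (Suc k)" 0 h x]) (use assms in \<open>simp_all add: add.commute\<close>)
  show ?thesis
    apply (rule DERIV_imp_deriv)
    apply (rule derivative_eq_intros h0 h1 h2 refl)+
    apply (simp add: algebra_simps del: funpow.simps)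
    done
qed

lemma lop_M: "lop q b h = (\<lambda>t. t * (Dr^^Suc(Suc 0)) h t + (q+1 - t) * (Dr^^Suc 0) h t + (-b) * (Dr^^0) h t)"
  unfolding lop_def L2_def by (simp add: numeral_2_eq_2)

lemma lop_lop:
  assumes "smooth 4 h" "x\<in>Pos"
  shows "lop p a (lop q b h) x =
     x*(x*(Dr^^4) h x + (q+3-x)*(Dr^^3) h x + (-b-2)*(Dr^^2) h x)
   + (p+1-x)*(x*(Dr^^3) h x + (q+2-x)*(Dr^^2) h x + (-b-1)*(Dr^^1) h x)
   - a*(x*(Dr^^2) h x + (q+1-x)*(Dr^^1) h x - b*(Dr^^0) h x)"
proof -
  have s3: "smooth (Suc (Suc (Suc 0))) h" and s4: "smooth (Suc (Suc (Suc (Suc 0)))) h"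
    using assms(1) smooth_mono by (auto simp: eval_nat_numeral)
  define G where "G = lop q b h"
  have d1: "deriv G t = t * (Dr^^Suc(Suc(Suc 0))) h t + (q+1+1-t) * (Dr^^Suc(Suc 0)) h t + (-b - 1) * (Dr^^Suc 0) h t"
    if "t\<in>Pos" for t
    unfolding G_def lop_M by (rule M_deriv[OF s3 that])
  have "deriv (deriv G) x = deriv (\<lambda>t. t * (Dr^^Suc(Suc(Suc 0))) h t + (q+1+1-t) * (Dr^^Suc(Suc 0)) h t + (-b - 1) * (Dr^^Suc 0) h t) x"
    by (rule loc_deriv) (use d1 assms in auto)
  also have "\<dots> = x * (Dr^^Suc(Suc(Suc(Suc 0)))) h x + (q+1+1+1-x) * (Dr^^Suc(Suc(Suc 0))) h x + (-b - 1 - 1) * (Dr^^Suc(Suc 0)) h x"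
    by (rule M_deriv[OF s4 assms(2)])
  finally have d2: "deriv (deriv G) x = \<dots>" .
  have "lop p a G x = x * deriv (deriv G) x + (p+1-x) * deriv G x - a * G x"
    unfolding lop_def L2_def by (simp add: numeral_2_eq_2)
  also note d2
  also note d1[OF assms(2)]
  finally show ?thesis unfolding G_def lop_M
    by (simp add: eval_nat_numeral algebra_simps)
qed

lemma two_factor:
  assumes "smooth 4 h" "x\<in>Pos"
  shows "lop a (m+2) (lop (a+m) (m+1) h) x = lop (a+m+1) (m+2) (lop (a-1) (m+1) h) x"
  unfolding lop_lop[OF assms] by (simp add: algebra_simps)


definition R :: "real \<Rightarrow> nat \<Rightarrow> (real \<Rightarrow> real) \<Rightarrow> real \<Rightarrow> real" where
  "R a m f = opprod (\<lambda>j. lop a (real j + 1)) m f"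

definition P :: "nat \<Rightarrow> (real \<Rightarrow> real) \<Rightarrow> real \<Rightarrow> real" where
  "P n f = opprod (\<lambda>j. lop (2 * real j + 1) (real j + 1)) n f"

lemma R_rec: "smooth (2*m+2) f \<Longrightarrow> x\<in>Pos \<Longrightarrow> R a (Suc m) f x = lop (a + real m) (real m + 1) (R (a-1) m f) x"
proof (induction m arbitrary: x)
  case 0 then show ?case by (simp add: R_def)
next
  case (Suc m)
  define H where "H = R (a-1) m f"
  have sH: "smooth 4 H" unfolding H_def R_def
  proof (rule smooth_opprod)
    have "4 + 2 * m = 2 * Suc m + 2" by simp
    then show "smooth (4 + 2 * m) f" using Suc.prems(1) by metis
  qed
  have IH: "\<forall>t\<in>Pos. R a (Suc m) f t = lop (a + real m) (real m + 1) H t"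
    using Suc.IH Suc.prems smooth_mono unfolding H_def by fastforce
  have "R a (Suc (Suc m)) f x = lop a (real m + 2) (R a (Suc m) f) x"
    by (simp add: R_def algebra_simps)
  also have "\<dots> = lop a (real m + 2) (lop (a + real m) (real m + 1) H) x"
    by (rule loc_lop) (use IH Suc.prems in auto)
  also have "\<dots> = lop (a + real m + 1) (real m + 2) (lop (a - 1) (real m + 1) H) x"
    using two_factor[OF sH Suc.prems(2), of a "real m"] by (simp add: algebra_simps)
  also have "\<dots> = lop (a + real (Suc m)) (real (Suc m) + 1) (R (a-1) (Suc m) f) x"
    by (simp add: R_def H_def algebra_simps)
  finally show ?case .
qed

lemma R_P: "smooth (2*n) f \<Longrightarrow> \<forall>x\<in>Pos. R (real n) n f x = P n f x"
proof (induction n)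
  case 0 then show ?case by (simp add: R_def P_def)
next
  case (Suc n)
  show ?case
  proof
    fix x :: real assume x: "x\<in>Pos"
    have IH: "\<forall>t\<in>Pos. R (real n) n f t = P n f t" using Suc smooth_mono by fastforce
    have "R (real (Suc n)) (Suc n) f x = lop (real (Suc n) + real n) (real n + 1) (R (real (Suc n) - 1) n f) x"
      by (rule R_rec) (use Suc.prems x in auto)
    also have "\<dots> = lop (2 * real n + 1) (real n + 1) (P n f) x"
      using loc_lop[OF IH x] by (simp add: algebra_simps)
    also have "\<dots> = P (Suc n) f x" by (simp add: P_def)
    finally show "R (real (Suc n)) (Suc n) f x = P (Suc n) f x" .
  qed
qed


lemma exp_lemma: "smooth n g \<Longrightarrow> x\<in>Pos \<Longrightarrow> (Dr^^n) (\<lambda>t. exp (-t) * g t) x = exp (-x) * (Eop^^n) g x"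
proof (induction n arbitrary: g x)
  case 0 then show ?case by simp
next
  case (Suc n)
  have d: "\<forall>t\<in>Pos. deriv (\<lambda>t. exp (-t) * g t) t = exp (-t) * Eop g t"
  proof
    fix t :: real assume t: "t \<in> Pos"
    have "((\<lambda>t. exp (-t) * g t) has_real_derivative (exp (-t) * (-1) * g t + exp (-t) * deriv g t)) (at t)"
      by (rule derivative_eq_intros refl smooth_has_deriv[OF Suc.prems(1) t])+ simp
    then show "deriv (\<lambda>t. exp (-t) * g t) t = exp (-t) * Eop g t"
      unfolding Eop_def by (subst DERIV_imp_deriv) (auto simp: algebra_simps)
  qed
  have "(Dr^^Suc n) (\<lambda>t. exp (-t) * g t) x = (Dr^^n) (\<lambda>t. exp (-t) * Eop g t) x"
    unfolding Dk_Suc by (rule loc_Dk) (use d Suc.prems in auto)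
  also have "\<dots> = exp (-x) * (Eop^^n) (Eop g) x"
    using Suc by (intro Suc.IH smooth_Eop) auto
  finally show ?case by (simp add: funpow_Suc_right del: funpow.simps)
qed

lemma leibniz_x: "smooth (Suc m) w \<Longrightarrow> x\<in>Pos \<Longrightarrow>
  (Dr^^Suc m) (\<lambda>t. t * w t) x = x * (Dr^^Suc m) w x + real (Suc m) * (Dr^^m) w x"
proof (induction m arbitrary: w x)
  case 0
  then show ?case by (auto intro!: DERIV_imp_deriv derivative_eq_intros smooth_has_deriv)
next
  case (Suc m)
  have d: "\<forall>t\<in>Pos. deriv (\<lambda>t. t * w t) t = w t + t * deriv w t"
    using Suc.prems by (auto intro!: DERIV_imp_deriv derivative_eq_intros smooth_has_deriv)
  have sw: "smooth (Suc m) w" "smooth (Suc m) (deriv w)"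
    using Suc.prems by (auto intro: smooth_SucD smooth_deriv)
  have "(Dr^^Suc (Suc m)) (\<lambda>t. t * w t) x = (Dr^^Suc m) (\<lambda>t. w t + t * deriv w t) x"
    unfolding Dk_Suc[of "Suc m"] by (rule loc_Dk) (use d Suc.prems in auto)
  also have "\<dots> = (Dr^^Suc m) w x + (Dr^^Suc m) (\<lambda>t. t * deriv w t) x"
    using sw Suc.prems by (intro Dk_add smooth_mult) auto
  also have "\<dots> = (Dr^^Suc m) w x + (x * (Dr^^Suc m) (deriv w) x + real (Suc m) * (Dr^^m) (deriv w) x)"
    using Suc.IH[OF sw(2) Suc.prems(2)] by simp
  also have "\<dots> = x * (Dr^^Suc (Suc m)) w x + real (Suc (Suc m)) * (Dr^^Suc m) w x"
    unfolding Dk_Suc[symmetric] by (simp add: algebra_simps del: funpow.simps)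
  finally show ?case .
qed

lemma L3: "smooth 2 g \<Longrightarrow> x\<in>Pos \<Longrightarrow> Eop (\<lambda>t. t * deriv g t + c * g t) x = lop c c g x"
proof -
  assume a: "smooth 2 g" "x\<in>Pos"
  have s: "smooth (Suc (Suc 0)) g" using a by (simp add: numeral_2_eq_2)
  have h1: "(deriv g has_real_derivative (Dr^^2) g x) (at x)"
    using smooth_Dk_has_deriv[of 1 0 g x] s a by (simp add: numeral_2_eq_2)
  have h0: "(g has_real_derivative deriv g x) (at x)" using smooth_has_deriv[of 1 g x] s a by simp
  have "deriv (\<lambda>t. t * deriv g t + c * g t) x = deriv g x + x * (Dr^^2) g x + c * deriv g x"
    by (rule DERIV_imp_deriv) (auto intro!: derivative_eq_intros h0 h1)
  then show ?thesis unfolding Eop_def lop_def L2_def by (simp add: algebra_simps)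
qed

lemma L4: "smooth 3 g \<Longrightarrow> x\<in>Pos \<Longrightarrow> Eop (lop \<gamma> c g) x = lop (\<gamma>+1) c (Eop g) x"
proof -
  assume a: "smooth 3 g" "x\<in>Pos"
  have s3: "smooth (Suc (Suc (Suc 0))) g" using a by (simp add: numeral_3_eq_3)
  have dl: "deriv (lop \<gamma> c g) x = x * (Dr^^Suc(Suc(Suc 0))) g x + (\<gamma>+1+1-x) * (Dr^^Suc(Suc 0)) g x + (-c - 1) * (Dr^^Suc 0) g x"
    unfolding lop_M by (rule M_deriv[OF s3 a(2)])
  have sd: "smooth (Suc (Suc 0)) (deriv g)" "smooth (Suc (Suc 0)) g"
    using s3 by (auto intro: smooth_SucD smooth_deriv)
  have e2: "(Dr^^2) (\<lambda>t. deriv g t - g t) x = (Dr^^3) g x - (Dr^^2) g x"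
    using Dk_diff[of 2 "deriv g" g x] sd a(2)
    by (simp add: numeral_2_eq_2 numeral_3_eq_3 del: funpow.simps) (simp add: Dk_Suc)
  have e1: "deriv (\<lambda>t. deriv g t - g t) x = (Dr^^2) g x - deriv g x"
    using Dk_diff[of 1 "deriv g" g x] sd a(2) smooth_mono[of 2 _ 1]
    by (simp add: numeral_2_eq_2)
  show ?thesis
    unfolding Eop_def[of "lop \<gamma> c g"] dl
    unfolding lop_def L2_def Eop_def e1 e2
    by (simp add: eval_nat_numeral algebra_simps)
qed

lemma L5: "smooth (n+2) g \<Longrightarrow> x\<in>Pos \<Longrightarrow> (Eop^^n) (lop \<gamma> c g) x = lop (\<gamma> + real n) c ((Eop^^n) g) x"
proof (induction n arbitrary: g \<gamma> x)
  case 0 then show ?case by simp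
next
  case (Suc n)
  have "(Eop^^Suc n) (lop \<gamma> c g) x = (Eop^^n) (Eop (lop \<gamma> c g)) x"
    by (simp add: funpow_Suc_right del: funpow.simps)
  also have "\<dots> = (Eop^^n) (lop (\<gamma>+1) c (Eop g)) x"
    by (rule loc_Eopn) (use Suc.prems in \<open>auto intro!: L4 elim: smooth_mono\<close>)
  also have "\<dots> = lop (\<gamma> + 1 + real n) c ((Eop^^n) (Eop g)) x"
    using Suc by (intro Suc.IH smooth_Eop) auto
  also have "\<dots> = lop (\<gamma> + real (Suc n)) c ((Eop^^Suc n) g) x"
    by (simp add: funpow_Suc_right algebra_simps del: funpow.simps)
  finally show ?case .
qed


definition Tn :: "nat \<Rightarrow> (real \<Rightarrow> real) \<Rightarrow> real \<Rightarrow> real" where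
  "Tn n u = (Eop^^n) ((Dr^^n) (\<lambda>s. s^n * u s))"

lemma T_rec: "smooth (2*n+2) u \<Longrightarrow> x\<in>Pos \<Longrightarrow> Tn (Suc n) u x = lop (2 * real n + 1) (real n + 1) (Tn n u) x"
proof -
  assume a: "smooth (2*n+2) u" "x\<in>Pos"
  define w where "w = (\<lambda>s. s^n * u s)"
  have sw: "smooth (2*n+2) w" unfolding w_def by (intro smooth_mult a) simp
  define g where "g = (Dr^^n) w"
  have "n + 2 + n = 2*n+2" by simp
  then have sg: "smooth (n+2) g" unfolding g_def using smooth_Dk[of "n+2" n w] sw by metis
  have sg2: "smooth 2 g" using sg smooth_mono by fastforce
  have ew: "(\<lambda>s. s^Suc n * u s) = (\<lambda>s. s * w s)" unfolding w_def by (simp add: algebra_simps)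
  have lb: "\<forall>t\<in>Pos. (Dr^^Suc n) (\<lambda>s. s * w s) t = t * deriv g t + real (Suc n) * g t"
  proof
    fix t :: real assume t: "t\<in>Pos"
    have "smooth (Suc n) w" using sw smooth_mono by fastforce
    from leibniz_x[OF this t] show "(Dr^^Suc n) (\<lambda>s. s * w s) t = t * deriv g t + real (Suc n) * g t"
      by (simp add: g_def)
  qed
  have "Tn (Suc n) u x = (Eop^^n) (Eop ((Dr^^Suc n) (\<lambda>s. s * w s))) x"
    unfolding Tn_def ew by (simp add: funpow_Suc_right del: funpow.simps)
  also have "\<dots> = (Eop^^n) (lop (real (Suc n)) (real (Suc n)) g) x"
  proof (rule loc_Eopn[OF _ a(2)], intro ballI)
    fix t :: real assume t: "t\<in>Pos"
    have "Eop ((Dr^^Suc n) (\<lambda>s. s * w s)) t = Eop (\<lambda>t. t * deriv g t + real (Suc n) * g t) t"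
      by (rule loc_Eop[OF _ t]) (use lb in auto)
    also have "\<dots> = lop (real (Suc n)) (real (Suc n)) g t" by (rule L3[OF sg2 t])
    finally show "Eop ((Dr^^Suc n) (\<lambda>s. s * w s)) t = lop (real (Suc n)) (real (Suc n)) g t" .
  qed
  also have "\<dots> = lop (real (Suc n) + real n) (real (Suc n)) ((Eop^^n) g) x"
    by (rule L5[OF sg a(2)])
  also have "\<dots> = lop (2 * real n + 1) (real n + 1) (Tn n u) x"
    by (simp add: Tn_def g_def w_def algebra_simps)
  finally show ?thesis .
qed

lemma T_P: "smooth (2*n) u \<Longrightarrow> \<forall>x\<in>Pos. Tn n u x = P n u x"
proof (induction n)
  case 0 then show ?case by (simp add: Tn_def P_def)
next
  case (Suc n)
  show ?case
  proof
    fix x :: real assume x: "x\<in>Pos"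
    have IH: "\<forall>t\<in>Pos. Tn n u t = P n u t" using Suc smooth_mono by fastforce
    have "Tn (Suc n) u x = lop (2 * real n + 1) (real n + 1) (Tn n u) x"
      by (rule T_rec) (use Suc.prems x in auto)
    also have "\<dots> = lop (2 * real n + 1) (real n + 1) (P n u) x"
      using loc_lop[OF IH x] by simp
    also have "\<dots> = P (Suc n) u x" by (simp add: P_def)
    finally show "Tn (Suc n) u x = P (Suc n) u x" .
  qed
qed

lemma Lhigh_T: "smooth (2*\<alpha>+4) u \<Longrightarrow> x\<in>Pos \<Longrightarrow>
   Lhigh \<alpha> (\<lambda>t. t * u t) x = (-1)^(\<alpha>+1) * x * Tn (\<alpha>+2) u x"
proof -
  assume a: "smooth (2*\<alpha>+4) u" "x\<in>Pos"
  have e: "(\<lambda>s. s^(\<alpha>+1) * (s * u s)) = (\<lambda>s. s^(\<alpha>+2) * u s)" by (simp add: algebra_simps)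
  have "smooth (2*\<alpha>+4) (\<lambda>s. s^(\<alpha>+2) * u s)" using a by (intro smooth_mult smooth_pow)
  moreover have "\<alpha> + 2 + (\<alpha> + 2) = 2*\<alpha>+4" by simp
  ultimately have sg: "smooth (\<alpha>+2) ((Dr^^(\<alpha>+2)) (\<lambda>s. s^(\<alpha>+2) * u s))"
    using smooth_Dk[of "\<alpha>+2" "\<alpha>+2" "\<lambda>s. s^(\<alpha>+2) * u s"] by metis
  show ?thesis unfolding Lhigh_def e exp_lemma[OF sg a(2)] Tn_def
    by (simp add: exp_minus field_simps)
qed

lemma X1:
  assumes "smooth 2 u" "x\<in>Pos"
  shows "L2 \<gamma> (\<lambda>t. t * u t) x - (\<gamma>+1) / x * (x * u x) - c * (x * u x) = x * lop (\<gamma>+2) (c+1) u x"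
proof -
  have s1: "smooth (Suc 0) u" and s2: "smooth (Suc (Suc 0)) u" using assms smooth_mono by (auto simp: numeral_2_eq_2)
  have d1: "deriv (\<lambda>t. t * u t) x = x * deriv u x + u x" using leibniz_x[OF s1 assms(2)] by simp
  have d2: "(Dr^^2) (\<lambda>t. t * u t) x = x * (Dr^^2) u x + 2 * deriv u x"
    using leibniz_x[OF s2 assms(2)] by (simp add: numeral_2_eq_2 del: funpow.simps) simp
  show ?thesis using assms(2) unfolding L2_def lop_def d1 d2 by (simp add: field_simps)
qed

lemma XI:
  assumes "\<And>j. d j = g j + 1" "\<And>j. e j = g j + 2" "\<And>j. c' j = c j + 1"
  shows "smooth (2*m) u \<Longrightarrow> \<forall>x\<in>Pos. opprod (\<lambda>j f t. L2 (g j) f t - d j / t * f t - c j * f t) m (\<lambda>t. t * u t) x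
          = x * opprod (\<lambda>j. lop (e j) (c' j)) m u x"
proof (induction m)
  case 0 then show ?case by simp
next
  case (Suc m)
  show ?case
  proof
    fix x :: real assume x: "x\<in>Pos"
    define B where "B = opprod (\<lambda>j. lop (e j) (c' j)) m u"
    have IH: "\<forall>t\<in>Pos. opprod (\<lambda>j f t. L2 (g j) f t - d j / t * f t - c j * f t) m (\<lambda>t. t * u t) t = t * B t"
      using Suc smooth_mono unfolding B_def by fastforce
    have sB: "smooth 2 B" unfolding B_def by (rule smooth_opprod) (use Suc.prems in simp)
    have "opprod (\<lambda>j f t. L2 (g j) f t - d j / t * f t - c j * f t) (Suc m) (\<lambda>t. t * u t) x
        = L2 (g m) (\<lambda>t. t * B t) x - (g m + 1) / x * (x * B x) - c m * (x * B x)"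
      using loc_L2[OF IH x] IH x by (simp add: assms)
    also have "\<dots> = x * lop (g m + 2) (c m + 1) B x" by (rule X1[OF sB x])
    also have "\<dots> = x * opprod (\<lambda>j. lop (e j) (c' j)) (Suc m) u x" by (simp add: B_def assms)
    finally show "opprod (\<lambda>j f t. L2 (g j) f t - d j / t * f t - c j * f t) (Suc m) (\<lambda>t. t * u t) x
       = x * opprod (\<lambda>j. lop (e j) (c' j)) (Suc m) u x" .
  qed
qed

lemma loc_Lhigh: "(\<forall>t\<in>Pos. y t = z t) \<Longrightarrow> x\<in>Pos \<Longrightarrow> Lhigh \<alpha> y x = Lhigh \<alpha> z x"
proof -
  assume a: "\<forall>t\<in>Pos. y t = z t" "x\<in>Pos"
  have "\<forall>t\<in>Pos. (Dr^^(\<alpha>+2)) (\<lambda>s. s^(\<alpha>+1) * y s) t = (Dr^^(\<alpha>+2)) (\<lambda>s. s^(\<alpha>+1) * z s) t"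
  proof
    fix t :: real assume "t\<in>Pos"
    then show "(Dr^^(\<alpha>+2)) (\<lambda>s. s^(\<alpha>+1) * y s) t = (Dr^^(\<alpha>+2)) (\<lambda>s. s^(\<alpha>+1) * z s) t"
      by (rule loc_Dk[rotated]) (use a(1) in auto)
  qed
  then have "(Dr^^(\<alpha>+2)) (\<lambda>t. exp (-t) * (Dr^^(\<alpha>+2)) (\<lambda>s. s^(\<alpha>+1) * y s) t) x
     = (Dr^^(\<alpha>+2)) (\<lambda>t. exp (-t) * (Dr^^(\<alpha>+2)) (\<lambda>s. s^(\<alpha>+1) * z s) t) x"
    using a(2) by (intro loc_Dk) auto
  then show ?thesis unfolding Lhigh_def by simp
qed


lemma claim4_gen: "smooth (2*\<alpha>+4) u \<Longrightarrow> x\<in>Pos \<Longrightarrow> Lhigh \<alpha> (\<lambda>t. t * u t) x = (-1) ^ (\<alpha> + 1) * x *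
        opprod (\<lambda>j f t. L2 (2 * real j + 1) f t - (real j + 1) * f t) (\<alpha> + 2) u x"
proof -
  assume a: "smooth (2*\<alpha>+4) u" "x\<in>Pos"
  have e: "(\<lambda>j f t. L2 (2 * real j + 1) f t - (real j + 1) * f t) = (\<lambda>j. lop (2 * real j + 1) (real j + 1))"
    by (intro ext) (simp add: lop_def)
  have "2*(\<alpha>+2) = 2*\<alpha>+4" by simp
  then have "smooth (2*(\<alpha>+2)) u" using a by metis
  then show ?thesis using Lhigh_T[OF a] T_P[of "\<alpha>+2" u] a unfolding e P_def by simp
qed

lemma claim2_gen: "smooth (2*\<alpha>+4) u \<Longrightarrow> x\<in>Pos \<Longrightarrow> Lhigh \<alpha> (\<lambda>t. t * u t) x = (-1) ^ (\<alpha> + 1) * x *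
        opprod (\<lambda>j f t. L2 (real \<alpha> + 2) f t - (real j + 1) * f t) (\<alpha> + 2) u x"
proof -
  assume a: "smooth (2*\<alpha>+4) u" "x\<in>Pos"
  have e: "(\<lambda>j f t. L2 (real \<alpha> + 2) f t - (real j + 1) * f t) = (\<lambda>j. lop (real (\<alpha>+2)) (real j + 1))"
    by (intro ext) (simp add: lop_def add.commute)
  have e2: "(\<lambda>j f t. L2 (2 * real j + 1) f t - (real j + 1) * f t) = (\<lambda>j. lop (2 * real j + 1) (real j + 1))"
    by (intro ext) (simp add: lop_def)
  have "2*(\<alpha>+2) = 2*\<alpha>+4" by simp
  then have "smooth (2*(\<alpha>+2)) u" using a by metis
  then have "R (real (\<alpha>+2)) (\<alpha>+2) u x = P (\<alpha>+2) u x" using R_P a by blast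
  then show ?thesis using claim4_gen[OF a] unfolding e e2 R_def P_def by simp
qed

theorem theorem3p1:
  fixes \<alpha> :: nat and y u :: "real \<Rightarrow> real"
  assumes "C_k_on (2 * \<alpha> + 4) {0<..} y"
    and "C_k_on (2 * \<alpha> + 4) {0<..} u"
  shows "\<forall>x>0.
     Lhigh \<alpha> y x = (-1) ^ (\<alpha> + 1) *
        opprod (\<lambda>j f t. L2 (real \<alpha>) f t - (real \<alpha> + 1) / t * f t - real j * f t) (\<alpha> + 2) y x
   \<and> Lhigh \<alpha> (\<lambda>t. t * u t) x = (-1) ^ (\<alpha> + 1) * x *
        opprod (\<lambda>j f t. L2 (real \<alpha> + 2) f t - (real j + 1) * f t) (\<alpha> + 2) u x
   \<and> Lhigh \<alpha> y x = (-1) ^ (\<alpha> + 1) *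
        opprod (\<lambda>j f t. L2 (2 * real j - 1) f t - 2 * real j / t * f t - real j * f t) (\<alpha> + 2) y x
   \<and> Lhigh \<alpha> (\<lambda>t. t * u t) x = (-1) ^ (\<alpha> + 1) * x *
        opprod (\<lambda>j f t. L2 (2 * real j + 1) f t - (real j + 1) * f t) (\<alpha> + 2) u x"
proof (intro allI impI)
  fix x :: real assume "x > 0"
  then have x: "x\<in>Pos" by simp
  have sy: "smooth (2*\<alpha>+4) y" and su: "smooth (2*\<alpha>+4) u"
    using assms unfolding C_k_on_def smooth_def by auto
  define v where "v = (\<lambda>t. y t * inverse t)"
  have sv: "smooth (2*\<alpha>+4) v" unfolding v_def
    by (intro smooth_mult sy smooth_inverse smooth_id) auto
  have yv: "\<forall>t\<in>Pos. y t = t * v t" unfolding v_def by auto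
  have "2*(\<alpha>+2) = 2*\<alpha>+4" by simp
  then have sv2: "smooth (2*(\<alpha>+2)) v" using sv by metis
  have Ly: "Lhigh \<alpha> y x = Lhigh \<alpha> (\<lambda>t. t * v t) x" by (rule loc_Lhigh[OF yv x])
  have c1: "Lhigh \<alpha> y x = (-1) ^ (\<alpha> + 1) *
        opprod (\<lambda>j f t. L2 (real \<alpha>) f t - (real \<alpha> + 1) / t * f t - real j * f t) (\<alpha> + 2) y x"
  proof -
    have "opprod (\<lambda>j f t. L2 (real \<alpha>) f t - (real \<alpha> + 1) / t * f t - real j * f t) (\<alpha> + 2) y x
        = opprod (\<lambda>j f t. L2 (real \<alpha>) f t - (real \<alpha> + 1) / t * f t - real j * f t) (\<alpha> + 2) (\<lambda>t. t * v t) x"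
      by (rule loc_opprod[OF _ yv x]) (simp add: loc_L2)
    also have "\<dots> = x * opprod (\<lambda>j. lop (real \<alpha> + 2) (real j + 1)) (\<alpha> + 2) v x"
      using XI[of "\<lambda>j. real \<alpha> + 1" "\<lambda>j. real \<alpha>" "\<lambda>j. real \<alpha> + 2" "\<lambda>j. real j + 1" "\<lambda>j. real j" "\<alpha>+2" v] sv2 x
      by simp
    also have "opprod (\<lambda>j. lop (real \<alpha> + 2) (real j + 1)) = opprod (\<lambda>j f t. L2 (real \<alpha> + 2) f t - (real j + 1) * f t)"
      by (intro arg_cong[where f=opprod] ext) (simp add: lop_def)
    finally show ?thesis using Ly claim2_gen[OF sv x] by simp
  qed
  have c3: "Lhigh \<alpha> y x = (-1) ^ (\<alpha> + 1) *
        opprod (\<lambda>j f t. L2 (2 * real j - 1) f t - 2 * real j / t * f t - real j * f t) (\<alpha> + 2) y x"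
  proof -
    have "opprod (\<lambda>j f t. L2 (2 * real j - 1) f t - 2 * real j / t * f t - real j * f t) (\<alpha> + 2) y x
        = opprod (\<lambda>j f t. L2 (2 * real j - 1) f t - 2 * real j / t * f t - real j * f t) (\<alpha> + 2) (\<lambda>t. t * v t) x"
      by (rule loc_opprod[OF _ yv x]) (simp add: loc_L2)
    also have "\<dots> = x * opprod (\<lambda>j. lop (2 * real j + 1) (real j + 1)) (\<alpha> + 2) v x"
      using XI[of "\<lambda>j. 2 * real j" "\<lambda>j. 2 * real j - 1" "\<lambda>j. 2 * real j + 1" "\<lambda>j. real j + 1" "\<lambda>j. real j" "\<alpha>+2" v] sv2 x
      by simp
    also have "opprod (\<lambda>j. lop (2 * real j + 1) (real j + 1)) = opprod (\<lambda>j f t. L2 (2 * real j + 1) f t - (real j + 1) * f t)"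
      by (intro arg_cong[where f=opprod] ext) (simp add: lop_def)
    finally show ?thesis using Ly claim4_gen[OF sv x] by simp
  qed
  show "Lhigh \<alpha> y x = (-1) ^ (\<alpha> + 1) *
        opprod (\<lambda>j f t. L2 (real \<alpha>) f t - (real \<alpha> + 1) / t * f t - real j * f t) (\<alpha> + 2) y x
   \<and> Lhigh \<alpha> (\<lambda>t. t * u t) x = (-1) ^ (\<alpha> + 1) * x *
        opprod (\<lambda>j f t. L2 (real \<alpha> + 2) f t - (real j + 1) * f t) (\<alpha> + 2) u x
   \<and> Lhigh \<alpha> y x = (-1) ^ (\<alpha> + 1) *
        opprod (\<lambda>j f t. L2 (2 * real j - 1) f t - 2 * real j / t * f t - real j * f t) (\<alpha> + 2) y x
   \<and> Lhigh \<alpha> (\<lambda>t. t * u t) x = (-1) ^ (\<alpha> + 1) * x *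
        opprod (\<lambda>j f t. L2 (2 * real j + 1) f t - (real j + 1) * f t) (\<alpha> + 2) u x"
    using c1 c3 claim2_gen[OF su x] claim4_gen[OF su x] by blast
qed

end
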